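(* Let $E$ be a Banach $f$-algebra and let $(x_\alpha)_{\alpha\in A}$, $(y_\beta)_{\beta\in B}$ be nets in $E$ with $x_\alpha\xrightarrow{mw}x$ and $y_\beta\xrightarrow{mw}y$. Then the nets $(x_\alpha\vee y_\beta)_{(\alpha,\beta)\in A\times B}$ and $(x_\alpha\wedge y_\beta)_{(\alpha,\beta)\in A\times B}$ $mw$-converge to $x\vee y$ and $x\wedge y$, respectively.
   Context: All vector lattices are real and Archimedean. An $f$-algebra is a vector lattice with an associative multiplication making it an algebra, such that products of positive elements are positive and $x\wedge y=0$ implies $(xz)\wedge y=(zx)\wedge y=0$ for all $z\ge0$. A Banach $f$-algebra is an $f$-algebra which is a Banach lattice with $\|xy\|\le\|x\|\|y\|$. A net $(x_\alpha)$ in $E$ $mw$-converges to $x$ ($x_\alpha\xrightarrow{mw}x$) if $|x_\alpha-x|u\to0$ weakly for every $u\in E_+$. $A\times B$ is directed componentwise. *)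

theory Defs
  imports "HOL-Analysis.Analysis"
begin

class banach_lattice_algebra_base =
  real_normed_algebra + banach + lattice + ordered_real_vector

definition lat_abs :: "'a::{lattice, ab_group_add} \<Rightarrow> 'a" where
  "lat_abs x = sup x (- x)"

definition archimedean_vl :: "'a::banach_lattice_algebra_base itself \<Rightarrow> bool" where
  "archimedean_vl _ \<longleftrightarrow>
     (\<forall>x y :: 'a. 0 \<le> x \<and> (\<forall>n::nat. real n *\<^sub>R x \<le> y) \<longrightarrow> x = 0)"

definition lattice_norm :: "'a::banach_lattice_algebra_base itself \<Rightarrow> bool" where
  "lattice_norm _ \<longleftrightarrow> (\<forall>x y :: 'a. lat_abs x \<le> lat_abs y \<longrightarrow> norm x \<le> norm y)"

definition f_algebra :: "'a::banach_lattice_algebra_base itself \<Rightarrow> bool" where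
  "f_algebra _ \<longleftrightarrow>
     (\<forall>x y :: 'a. 0 \<le> x \<and> 0 \<le> y \<longrightarrow> 0 \<le> x * y) \<and>
     (\<forall>x y z :: 'a. inf x y = 0 \<and> 0 \<le> z \<longrightarrow> inf (x * z) y = 0 \<and> inf (z * x) y = 0)"

definition banach_f_algebra :: "'a::banach_lattice_algebra_base itself \<Rightarrow> bool" where
  "banach_f_algebra T \<longleftrightarrow> archimedean_vl T \<and> lattice_norm T \<and> f_algebra T"

definition directed :: "('i \<Rightarrow> 'i \<Rightarrow> bool) \<Rightarrow> bool" where
  "directed le \<longleftrightarrow> (\<forall>a. le a a) \<and> (\<forall>a b c. le a b \<and> le b c \<longrightarrow> le a c) \<and>
     (\<exists>a::'i. True) \<and> (\<forall>a b. \<exists>c. le a c \<and> le b c)"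

definition net_tendsto :: "('i \<Rightarrow> 'i \<Rightarrow> bool) \<Rightarrow> ('i \<Rightarrow> 'b::topological_space) \<Rightarrow> 'b \<Rightarrow> bool" where
  "net_tendsto le x l \<longleftrightarrow>
     (\<forall>S. open S \<and> l \<in> S \<longrightarrow> (\<exists>a0. \<forall>a. le a0 a \<longrightarrow> x a \<in> S))"

definition weak_tendsto :: "('i \<Rightarrow> 'i \<Rightarrow> bool) \<Rightarrow> ('i \<Rightarrow> 'a::real_normed_vector) \<Rightarrow> 'a \<Rightarrow> bool" where
  "weak_tendsto le x l \<longleftrightarrow>
     (\<forall>f :: 'a \<Rightarrow> real. bounded_linear f \<longrightarrow> net_tendsto le (\<lambda>a. f (x a)) (f l))"

definition mw_tendsto :: "('i \<Rightarrow> 'i \<Rightarrow> bool) \<Rightarrow> ('i \<Rightarrow> 'a::banach_lattice_algebra_base) \<Rightarrow> 'a \<Rightarrow> bool" where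
  "mw_tendsto le x l \<longleftrightarrow>
     (\<forall>u::'a. 0 \<le> u \<longrightarrow> weak_tendsto le (\<lambda>a. lat_abs (x a - l) * u) 0)"

definition prod_dir :: "('i \<Rightarrow> 'i \<Rightarrow> bool) \<Rightarrow> ('j \<Rightarrow> 'j \<Rightarrow> bool) \<Rightarrow> ('i \<times> 'j) \<Rightarrow> ('i \<times> 'j) \<Rightarrow> bool" where
  "prod_dir leA leB p q \<longleftrightarrow> leA (fst p) (fst q) \<and> leB (snd p) (snd q)"

end

theory Submission
  imports Defs "HOL-Library.Lattice_Algebras"
begin

subclass (in banach_lattice_algebra_base) lattice_ab_group_add ..

lemma la_nonneg: "0 \<le> lat_abs (x::'a::lattice_ab_group_add)"
proof -
  have "x + - x \<le> lat_abs x + lat_abs x"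
    unfolding lat_abs_def by (intro add_mono) auto
  then show ?thesis by simp
qed

lemma la_pos: "0 \<le> (x::'a::lattice_ab_group_add) \<Longrightarrow> lat_abs x = x"
  unfolding lat_abs_def by (metis neg_le_0_iff_le order.trans sup.absorb1)

lemma norm_mono_pos:
  fixes w z :: "'a::banach_lattice_algebra_base"
  assumes "lattice_norm TYPE('a)" "0 \<le> w" "w \<le> z"
  shows "norm w \<le> norm z"
  using assms unfolding lattice_norm_def
  by (metis la_pos order.trans)

lemma pos_le_abs: "sup (x::'a::lattice_ab_group_add) 0 \<le> lat_abs x"
  using la_nonneg[of x] unfolding lat_abs_def by (simp add: le_supI1)

lemma neg_le_abs: "sup (- (x::'a::lattice_ab_group_add)) 0 \<le> lat_abs x"
  using la_nonneg[of x] unfolding lat_abs_def by (simp add: le_supI2)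

lemma pos_minus_neg: "sup (x::'a::lattice_ab_group_add) 0 - sup (-x) 0 = x"
proof -
  have "sup (-x) 0 = - inf x 0" by (simp add: neg_inf_eq_sup)
  then show ?thesis using add_eq_inf_sup[of x 0] by (simp add: algebra_simps)
qed

lemma birk_sup:
  fixes a b c d :: "'a::lattice_ab_group_add"
  shows "lat_abs (sup a b - sup c d) \<le> lat_abs (a - c) + lat_abs (b - d)"
proof -
  let ?M = "lat_abs (a - c) + lat_abs (b - d)"
  have A1: "a - c \<le> ?M" "c - a \<le> ?M"
    using la_nonneg[of "b-d"] unfolding lat_abs_def
    by (auto intro!: add_increasing2 simp: le_supI1 le_supI2)
  have A2: "b - d \<le> ?M" "d - b \<le> ?M"
    using la_nonneg[of "a-c"] unfolding lat_abs_def
    by (auto intro!: add_increasing simp: le_supI1 le_supI2)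
  have "a \<le> sup c d + ?M"
  proof -
    have "a \<le> c + ?M" using A1(1) by (simp add: algebra_simps)
    also have "\<dots> \<le> sup c d + ?M" by simp
    finally show ?thesis .
  qed
  moreover have "b \<le> sup c d + ?M"
  proof -
    have "b \<le> d + ?M" using A2(1) by (simp add: algebra_simps)
    also have "\<dots> \<le> sup c d + ?M" by simp
    finally show ?thesis .
  qed
  ultimately have "sup a b \<le> sup c d + ?M" by (rule le_supI)
  then have L1: "sup a b - sup c d \<le> ?M" by (metis diff_le_eq add.commute)
  have "c \<le> sup a b + ?M"
  proof -
    have "c \<le> a + ?M" using A1(2) by (simp add: algebra_simps)
    also have "\<dots> \<le> sup a b + ?M" by simp
    finally show ?thesis .
  qed
  moreover have "d \<le> sup a b + ?M"
  proof -
    have "d \<le> b + ?M" using A2(2) by (simp add: algebra_simps)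
    also have "\<dots> \<le> sup a b + ?M" by simp
    finally show ?thesis .
  qed
  ultimately have "sup c d \<le> sup a b + ?M" by (rule le_supI)
  then have L2: "- (sup a b - sup c d) \<le> ?M" by (metis diff_le_eq add.commute minus_diff_eq)
  show ?thesis using L1 L2 unfolding lat_abs_def by simp
qed

lemma la_neg: "lat_abs (- (x::'a::lattice_ab_group_add)) = lat_abs x"
  unfolding lat_abs_def by (simp add: sup_commute)

lemma grp: "- (x::'a::ab_group_add) - - y = - (x - y)" by simp

lemma birk_inf:
  fixes a b c d :: "'a::lattice_ab_group_add"
  shows "lat_abs (inf a b - inf c d) \<le> lat_abs (a - c) + lat_abs (b - d)"
proof -
  have "inf a b - inf c d = - (sup (-a) (-b) - sup (-c) (-d))"
    unfolding inf_eq_neg_sup[of a b] inf_eq_neg_sup[of c d] by (rule grp)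
  then have "lat_abs (inf a b - inf c d) = lat_abs (sup (-a) (-b) - sup (-c) (-d))"
    by (simp only: la_neg)
  also have "\<dots> \<le> lat_abs (-a - -c) + lat_abs (-b - -d)" by (rule birk_sup)
  also have "\<dots> = lat_abs (a - c) + lat_abs (b - d)"
    using la_neg[of "a - c"] la_neg[of "b - d"] by simp
  finally show ?thesis .
qed

definition Pp :: "('a::banach_lattice_algebra_base \<Rightarrow> real) \<Rightarrow> 'a \<Rightarrow> real" where
  "Pp f z = Sup (f ` {w. 0 \<le> w \<and> w \<le> z})"

context
  fixes f :: "'a::banach_lattice_algebra_base \<Rightarrow> real" and K :: real
  assumes LN: "lattice_norm TYPE('a)" and BL: "bounded_linear f"
    and K: "\<And>x. norm (f x) \<le> norm x * K" and Kpos: "0 < K"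
begin

lemma Pp_bdd: "bdd_above (f ` {w. 0 \<le> w \<and> w \<le> z})"
proof (rule bdd_aboveI2)
  fix w assume "w \<in> {w. 0 \<le> w \<and> w \<le> z}"
  then have "norm w \<le> norm z" using norm_mono_pos[OF LN] by auto
  then have "norm w * K \<le> norm z * K" using Kpos by (simp add: mult_right_mono)
  then show "f w \<le> norm z * K"
    using K[of w] by simp
qed

lemma Pp_upper: "0 \<le> w \<Longrightarrow> w \<le> z \<Longrightarrow> f w \<le> Pp f z"
  unfolding Pp_def by (rule cSup_upper[OF _ Pp_bdd]) auto

lemma Pp_least: "0 \<le> z \<Longrightarrow> (\<And>w. 0 \<le> w \<Longrightarrow> w \<le> z \<Longrightarrow> f w \<le> M) \<Longrightarrow> Pp f z \<le> M"
  unfolding Pp_def by (rule cSup_least) auto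

lemma fS: "f (r *\<^sub>R x) = r * f x"
  using linear_simps(5)[OF BL] by simp

lemma f0: "f 0 = 0" using BL by (rule linear_simps)

lemma Pp_ge0: "0 \<le> z \<Longrightarrow> 0 \<le> Pp f z"
  using Pp_upper[of 0 z] f0 by simp

lemma Pp_zero: "Pp f 0 = 0"
  using Pp_ge0[of 0] Pp_least[of 0 0] f0 by (metis antisym order.refl)

lemma Pp_bound: "0 \<le> z \<Longrightarrow> Pp f z \<le> norm z * K"
  apply (rule Pp_least, assumption)
  subgoal for w
  proof -
    assume "0 \<le> z" "0 \<le> w" "w \<le> z"
    then have "norm w \<le> norm z" using norm_mono_pos[OF LN, of w z] by simp
    then have "norm w * K \<le> norm z * K" using Kpos by (intro mult_right_mono) auto
    then show "f w \<le> norm z * K" using K[of w] by simp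
  qed
  done

lemma Pp_add:
  assumes a: "0 \<le> a" and b: "0 \<le> b"
  shows "Pp f (a + b) = Pp f a + Pp f b"
proof (rule antisym)
  show "Pp f (a + b) \<le> Pp f a + Pp f b"
  proof (rule Pp_least)
    show "0 \<le> a + b" using a b by simp
    fix w assume w: "0 \<le> w" "w \<le> a + b"
    define w1 where "w1 = inf w a"
    define w2 where "w2 = w - w1"
    have "0 \<le> w1" unfolding w1_def using w(1) a by (rule le_infI)
    moreover have "w1 \<le> a" unfolding w1_def by (rule inf_le2)
    moreover have "0 \<le> w2" unfolding w2_def w1_def by (metis inf_le1 diff_ge_0_iff_ge)
    moreover have "w2 \<le> b"
    proof -
      have "w \<le> b + w" using b by (rule add_increasing) (rule order.refl)
      moreover have "w \<le> b + a" using w(2) by (simp only: add.commute)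
      ultimately have "w \<le> inf (b + w) (b + a)" by (rule le_infI)
      then have "w \<le> b + w1" by (simp only: w1_def add_inf_distrib_left)
      then show ?thesis unfolding w2_def by (metis diff_le_eq add.commute)
    qed
    ultimately have "f w1 + f w2 \<le> Pp f a + Pp f b"
      by (metis add_mono Pp_upper)
    moreover have "f w = f w1 + f w2"
      unfolding w2_def using BL by (simp add: linear_simps)
    ultimately show "f w \<le> Pp f a + Pp f b" by simp
  qed
next
  have "Pp f b \<le> Pp f (a + b) - Pp f a"
  proof (rule Pp_least[OF b])
    fix w2 assume w2: "0 \<le> w2" "w2 \<le> b"
    have "Pp f a \<le> Pp f (a + b) - f w2"
    proof (rule Pp_least[OF a])
      fix w1 assume w1: "0 \<le> w1" "w1 \<le> a"
      have "0 \<le> w1 + w2" using w1(1) w2(1) by (rule add_nonneg_nonneg)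
      moreover have "w1 + w2 \<le> a + b" using w1(2) w2(2) by (rule add_mono)
      ultimately have "f (w1 + w2) \<le> Pp f (a + b)" by (rule Pp_upper)
      then show "f w1 \<le> Pp f (a + b) - f w2"
        using BL by (simp add: linear_simps)
    qed
    then show "f w2 \<le> Pp f (a + b) - Pp f a" by simp
  qed
  then show "Pp f a + Pp f b \<le> Pp f (a + b)" by simp
qed

lemma Pp_scale:
  assumes c: "0 \<le> c" and z: "0 \<le> z"
  shows "Pp f (c *\<^sub>R z) = c * Pp f z"
proof (cases "c = 0")
  case True then show ?thesis by (simp add: Pp_zero)
next
  case False
  then have c: "0 < c" using c by simp
  then have c0: "0 \<le> c" by simp
  have ci: "0 \<le> 1/c" using c by simp
  have cz: "0 \<le> c *\<^sub>R z" using c0 z by (rule scaleR_nonneg_nonneg)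
  show ?thesis
  proof (rule antisym)
    show "Pp f (c *\<^sub>R z) \<le> c * Pp f z"
    proof (rule Pp_least[OF cz])
      fix w assume w: "0 \<le> w" "w \<le> c *\<^sub>R z"
      have "0 \<le> (1/c) *\<^sub>R w" using ci w(1) by (rule scaleR_nonneg_nonneg)
      moreover have "(1/c) *\<^sub>R w \<le> (1/c) *\<^sub>R (c *\<^sub>R z)"
        using w(2) ci by (rule scaleR_left_mono)
      moreover have "(1/c) *\<^sub>R (c *\<^sub>R z) = z" using c by simp
      ultimately have "f ((1/c) *\<^sub>R w) \<le> Pp f z" by (metis Pp_upper)
      moreover have "f w = c * f ((1/c) *\<^sub>R w)"
        using c by (simp add: fS)
      ultimately show "f w \<le> c * Pp f z" using c by simp
    qed
    have "Pp f z \<le> Pp f (c *\<^sub>R z) / c"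
    proof (rule Pp_least[OF z])
      fix w assume w: "0 \<le> w" "w \<le> z"
      have "0 \<le> c *\<^sub>R w" using c0 w(1) by (rule scaleR_nonneg_nonneg)
      moreover have "c *\<^sub>R w \<le> c *\<^sub>R z" using w(2) c0 by (rule scaleR_left_mono)
      ultimately have "f (c *\<^sub>R w) \<le> Pp f (c *\<^sub>R z)" by (rule Pp_upper)
      then have "c * f w \<le> Pp f (c *\<^sub>R z)"
        by (simp add: fS)
      then show "f w \<le> Pp f (c *\<^sub>R z) / c"
        using c by (simp add: pos_le_divide_eq mult.commute)
    qed
    then show "c * Pp f z \<le> Pp f (c *\<^sub>R z)" using c by (simp add: pos_le_divide_eq mult.commute)
  qed
qed

definition gext :: "'a \<Rightarrow> real" where
  "gext x = Pp f (sup x 0) - Pp f (sup (- x) 0)"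

lemma g_diff:
  assumes a: "0 \<le> a" and b: "0 \<le> b"
  shows "gext (a - b) = Pp f a - Pp f b"
proof -
  define p where "p = sup (a - b) 0"
  define n where "n = sup (- (a - b)) 0"
  have p0: "0 \<le> p" and n0: "0 \<le> n" unfolding p_def n_def by simp_all
  have "p - n = a - b" unfolding p_def n_def by (rule pos_minus_neg)
  then have "p + b = a + n" by (simp add: algebra_simps)
  then have "Pp f p + Pp f b = Pp f a + Pp f n"
    using Pp_add[OF p0 b] Pp_add[OF a n0] by simp
  then show ?thesis unfolding gext_def p_def[symmetric] n_def[symmetric] by simp
qed

lemma g_add: "gext (x + y) = gext x + gext y"
proof -
  let ?px = "sup x 0" and ?nx = "sup (-x) 0" and ?py = "sup y 0" and ?ny = "sup (-y) 0"
  have px: "0 \<le> ?px" and nx: "0 \<le> ?nx" and py: "0 \<le> ?py" and ny: "0 \<le> ?ny" by simp_all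
  have "x + y = (?px + ?py) - (?nx + ?ny)"
    by (simp only: add_diff_add pos_minus_neg)
  then have "gext (x + y) = Pp f (?px + ?py) - Pp f (?nx + ?ny)"
    using g_diff[of "?px + ?py" "?nx + ?ny"] px py nx ny by (simp add: add_nonneg_nonneg)
  also have "\<dots> = gext x + gext y"
    unfolding gext_def using Pp_add[OF px py] Pp_add[OF nx ny] by simp
  finally show ?thesis .
qed

lemma g_scale: "gext (c *\<^sub>R x) = c * gext x"
proof -
  let ?px = "sup x 0" and ?nx = "sup (-x) 0"
  have px: "0 \<le> ?px" and nx: "0 \<le> ?nx" by simp_all
  have xe: "x = ?px - ?nx" using pos_minus_neg[of x] by simp
  show ?thesis
  proof (cases "0 \<le> c")
    case True
    have "c *\<^sub>R x = c *\<^sub>R ?px - c *\<^sub>R ?nx"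
      by (metis pos_minus_neg scaleR_diff_right)
    then have "gext (c *\<^sub>R x) = Pp f (c *\<^sub>R ?px) - Pp f (c *\<^sub>R ?nx)"
      using g_diff[of "c *\<^sub>R ?px" "c *\<^sub>R ?nx"] True px nx by (simp add: scaleR_nonneg_nonneg)
    also have "\<dots> = c * gext x"
      unfolding gext_def using Pp_scale[OF True px] Pp_scale[OF True nx] by (simp add: algebra_simps)
    finally show ?thesis .
  next
    case False
    then have d: "0 \<le> - c" by simp
    have e1: "(- c) *\<^sub>R ?nx - (- c) *\<^sub>R ?px = (- c) *\<^sub>R (?nx - ?px)"
      by (rule scaleR_diff_right[symmetric])
    have e2: "?nx - ?px = - x" by (metis minus_diff_eq pos_minus_neg)
    have "c *\<^sub>R x = (- c) *\<^sub>R ?nx - (- c) *\<^sub>R ?px"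
      unfolding e1 e2 by simp
    then have "gext (c *\<^sub>R x) = Pp f ((- c) *\<^sub>R ?nx) - Pp f ((- c) *\<^sub>R ?px)"
      using g_diff[of "(- c) *\<^sub>R ?nx" "(- c) *\<^sub>R ?px"] d px nx
      by (simp add: scaleR_nonneg_nonneg del: scaleR_minus_left)
    also have "\<dots> = c * gext x"
      unfolding gext_def using Pp_scale[OF d px] Pp_scale[OF d nx] by (simp add: algebra_simps)
    finally show ?thesis .
  qed
qed

lemma Pp_abs_bound: "0 \<le> p \<Longrightarrow> p \<le> lat_abs x \<Longrightarrow> \<bar>Pp f p\<bar> \<le> norm x * K"
proof -
  assume p: "0 \<le> p" "p \<le> lat_abs x"
  have "lat_abs p \<le> lat_abs x" using p la_pos[of p] by simp
  then have "norm p \<le> norm x" using LN unfolding lattice_norm_def by blast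
  then have "norm p * K \<le> norm x * K" using Kpos by (intro mult_right_mono) auto
  then show ?thesis using Pp_bound[OF p(1)] Pp_ge0[OF p(1)] by simp
qed

lemma g_bl: "bounded_linear gext"
proof (rule bounded_linear_intro[where K = "2 * K"])
  fix x
  have "\<bar>gext x\<bar> \<le> \<bar>Pp f (sup x 0)\<bar> + \<bar>Pp f (sup (-x) 0)\<bar>"
    unfolding gext_def by simp
  also have "\<dots> \<le> norm x * K + norm x * K"
    by (intro add_mono Pp_abs_bound pos_le_abs neg_le_abs) simp_all
  finally show "norm (gext x) \<le> norm x * (2 * K)" by (simp add: algebra_simps)
qed (simp_all add: g_add g_scale)

lemma g_dom: "0 \<le> w \<Longrightarrow> w \<le> z \<Longrightarrow> f w \<le> gext z"
  using g_diff[of z 0] Pp_upper[of w z] Pp_zero by simp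

end

lemma exists_dom:
  fixes f :: "'a::banach_lattice_algebra_base \<Rightarrow> real"
  assumes LN: "lattice_norm TYPE('a)" and BL: "bounded_linear f"
  shows "\<exists>g. bounded_linear g \<and> (\<forall>w z. 0 \<le> w \<and> w \<le> z \<longrightarrow> f w \<le> g z)"
proof -
  obtain K where "\<And>x. norm (f x) \<le> norm x * K" "0 < K"
    using bounded_linear.pos_bounded[OF BL] by blast
  then show ?thesis using g_bl[OF LN BL] g_dom[OF LN BL] by blast
qed

lemma exists_dom_abs:
  fixes f :: "'a::banach_lattice_algebra_base \<Rightarrow> real"
  assumes LN: "lattice_norm TYPE('a)" and BL: "bounded_linear f"
  shows "\<exists>g. bounded_linear g \<and> (\<forall>w z. 0 \<le> w \<and> w \<le> z \<longrightarrow> \<bar>f w\<bar> \<le> g z)"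
proof -
  have f0: "f 0 = 0" using BL by (rule linear_simps)
  obtain g1 where g1: "bounded_linear g1" "\<forall>w z. 0 \<le> w \<and> w \<le> z \<longrightarrow> f w \<le> g1 z"
    using exists_dom[OF LN BL] by blast
  obtain g2 where g2: "bounded_linear g2" "\<forall>w z. 0 \<le> w \<and> w \<le> z \<longrightarrow> - f w \<le> g2 z"
    using exists_dom[OF LN bounded_linear_minus[OF BL]] by blast
  have "bounded_linear (\<lambda>z. g1 z + g2 z)" using g1(1) g2(1) by (rule bounded_linear_add)
  moreover have "\<forall>w z. 0 \<le> w \<and> w \<le> z \<longrightarrow> \<bar>f w\<bar> \<le> g1 z + g2 z"
  proof (intro allI impI)
    fix w z :: 'a assume wz: "0 \<le> w \<and> w \<le> z"
    then have z: "0 \<le> z" by auto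
    have "f 0 \<le> g1 z" "- f 0 \<le> g2 z" using g1(2) g2(2) z by auto
    moreover have "f w \<le> g1 z" "- f w \<le> g2 z" using g1(2) g2(2) wz by auto
    ultimately show "\<bar>f w\<bar> \<le> g1 z + g2 z" using f0 by linarith
  qed
  ultimately show ?thesis by blast
qed

lemma net_tendsto_real0:
  "net_tendsto le h (0::real) \<longleftrightarrow> (\<forall>e>0. \<exists>a0. \<forall>a. le a0 a \<longrightarrow> \<bar>h a\<bar> < e)"
proof
  assume H: "net_tendsto le h 0"
  show "\<forall>e>0. \<exists>a0. \<forall>a. le a0 a \<longrightarrow> \<bar>h a\<bar> < e"
  proof (intro allI impI)
    fix e :: real assume "e > 0"
    then have "open (ball 0 e) \<and> (0::real) \<in> ball 0 e" by simp
    then obtain a0 where "\<forall>a. le a0 a \<longrightarrow> h a \<in> ball 0 e"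
      using H unfolding net_tendsto_def by blast
    then show "\<exists>a0. \<forall>a. le a0 a \<longrightarrow> \<bar>h a\<bar> < e" by (auto simp: dist_real_def)
  qed
next
  assume H: "\<forall>e>0. \<exists>a0. \<forall>a. le a0 a \<longrightarrow> \<bar>h a\<bar> < e"
  show "net_tendsto le h 0" unfolding net_tendsto_def
  proof (intro allI impI)
    fix S :: "real set" assume "open S \<and> 0 \<in> S"
    then obtain e where e: "e > 0" "ball 0 e \<subseteq> S" using open_contains_ball by blast
    then obtain a0 where a0: "\<forall>a. le a0 a \<longrightarrow> \<bar>h a\<bar> < e" using H by blast
    have "\<forall>a. le a0 a \<longrightarrow> h a \<in> S"
    proof (intro allI impI)
      fix a assume "le a0 a"
      then have "h a \<in> ball 0 e" using a0 by (simp add: dist_real_def)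
      then show "h a \<in> S" using e(2) by blast
    qed
    then show "\<exists>a0. \<forall>a. le a0 a \<longrightarrow> h a \<in> S" by blast
  qed
qed

lemma main_gen:
  fixes x :: "'i \<Rightarrow> 'a::banach_lattice_algebra_base" and y :: "'j \<Rightarrow> 'a"
    and F :: "'i \<Rightarrow> 'j \<Rightarrow> 'a"
  assumes T: "banach_f_algebra TYPE('a)"
    and mx: "mw_tendsto leA x x0" and my: "mw_tendsto leB y y0"
    and Fb: "\<And>a b. lat_abs (F a b - F0) \<le> lat_abs (x a - x0) + lat_abs (y b - y0)"
  shows "mw_tendsto (prod_dir leA leB) (\<lambda>(a, b). F a b) F0"
proof -
  have LN: "lattice_norm TYPE('a)" using T unfolding banach_f_algebra_def by simp
  have pos: "\<And>p q::'a. 0 \<le> p \<Longrightarrow> 0 \<le> q \<Longrightarrow> 0 \<le> p * q"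
    using T unfolding banach_f_algebra_def f_algebra_def by blast
  show ?thesis unfolding mw_tendsto_def weak_tendsto_def
  proof (intro allI impI)
    fix u :: 'a and f :: "'a \<Rightarrow> real"
    assume u: "0 \<le> u" and BL: "bounded_linear f"
    have f0: "f 0 = 0" using BL by (rule linear_simps)
    obtain g where g: "bounded_linear g" "\<forall>w z. 0 \<le> w \<and> w \<le> z \<longrightarrow> \<bar>f w\<bar> \<le> g z"
      using exists_dom_abs[OF LN BL] by blast
    have g0: "g 0 = 0" using g(1) by (rule linear_simps)
    have gadd: "g (p + q) = g p + g q" for p q using g(1) by (rule linear_simps)
    have hx: "\<forall>e>0. \<exists>a0. \<forall>a. leA a0 a \<longrightarrow> \<bar>g (lat_abs (x a - x0) * u)\<bar> < e"
      using mx u g(1) unfolding mw_tendsto_def weak_tendsto_def net_tendsto_real0[symmetric]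
      by (metis g0)
    have hy: "\<forall>e>0. \<exists>b0. \<forall>b. leB b0 b \<longrightarrow> \<bar>g (lat_abs (y b - y0) * u)\<bar> < e"
      using my u g(1) unfolding mw_tendsto_def weak_tendsto_def net_tendsto_real0[symmetric]
      by (metis g0)
    have "\<forall>e>0. \<exists>p0. \<forall>p. prod_dir leA leB p0 p \<longrightarrow>
        \<bar>f (lat_abs ((case p of (a, b) \<Rightarrow> F a b) - F0) * u)\<bar> < e"
    proof (intro allI impI)
      fix e :: real assume e: "e > 0"
      obtain a0 where a0: "\<forall>a. leA a0 a \<longrightarrow> \<bar>g (lat_abs (x a - x0) * u)\<bar> < e/2"
        using hx e by (meson half_gt_zero)
      obtain b0 where b0: "\<forall>b. leB b0 b \<longrightarrow> \<bar>g (lat_abs (y b - y0) * u)\<bar> < e/2"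
        using hy e by (meson half_gt_zero)
      show "\<exists>p0. \<forall>p. prod_dir leA leB p0 p \<longrightarrow>
        \<bar>f (lat_abs ((case p of (a, b) \<Rightarrow> F a b) - F0) * u)\<bar> < e"
      proof (intro exI allI impI)
        fix p assume "prod_dir leA leB (a0, b0) p"
        then obtain a b where p: "p = (a, b)" "leA a0 a" "leB b0 b"
          unfolding prod_dir_def by (cases p) auto
        let ?w = "lat_abs (F a b - F0) * u"
        let ?z1 = "lat_abs (x a - x0) * u" and ?z2 = "lat_abs (y b - y0) * u"
        have w0: "0 \<le> ?w" using pos[OF la_nonneg u] .
        have "0 \<le> (lat_abs (x a - x0) + lat_abs (y b - y0) - lat_abs (F a b - F0)) * u"
          using Fb[of a b] u by (intro pos) simp_all
        then have wz: "?w \<le> ?z1 + ?z2" by (simp add: algebra_simps)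
        have "\<bar>f ?w\<bar> \<le> g (?z1 + ?z2)" using g(2) w0 wz by blast
        also have "\<dots> = g ?z1 + g ?z2" by (rule gadd)
        also have "\<dots> < e" using a0 b0 p by fastforce
        finally show "\<bar>f (lat_abs ((case p of (a, b) \<Rightarrow> F a b) - F0) * u)\<bar> < e"
          using p by simp
      qed
    qed
    then show "net_tendsto (prod_dir leA leB)
        (\<lambda>a. f (lat_abs ((case a of (a, b) \<Rightarrow> F a b) - F0) * u)) (f 0)"
      unfolding f0 net_tendsto_real0 .
  qed
qed

theorem proposition2p6:
  fixes x :: "'i \<Rightarrow> 'a::banach_lattice_algebra_base" and y :: "'j \<Rightarrow> 'a"
    and x0 y0 :: 'a
    and leA :: "'i \<Rightarrow> 'i \<Rightarrow> bool" and leB :: "'j \<Rightarrow> 'j \<Rightarrow> bool"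
  assumes "banach_f_algebra TYPE('a)"
    and "directed leA" and "directed leB"
    and "mw_tendsto leA x x0" and "mw_tendsto leB y y0"
  shows "mw_tendsto (prod_dir leA leB) (\<lambda>(a, b). sup (x a) (y b)) (sup x0 y0)
       \<and> mw_tendsto (prod_dir leA leB) (\<lambda>(a, b). inf (x a) (y b)) (inf x0 y0)"
proof
  show "mw_tendsto (prod_dir leA leB) (\<lambda>(a, b). sup (x a) (y b)) (sup x0 y0)"
    using main_gen[OF assms(1) assms(4) assms(5), of "\<lambda>a b. sup (x a) (y b)"] birk_sup by blast
  show "mw_tendsto (prod_dir leA leB) (\<lambda>(a, b). inf (x a) (y b)) (inf x0 y0)"
    using main_gen[OF assms(1) assms(4) assms(5), of "\<lambda>a b. inf (x a) (y b)"] birk_inf by blast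
qed

end
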